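(* Assume $\Lambda=\Lambda^{\rm h}=A\mathbb Z^d$, $d=\mathsf d_s\in\{2,3\}$, $x(\ell)=\ell$, $u_0\equiv0$, and that the homogeneous site strain potential $V^{\rm h}$ satisfies (S.R), (S.L) and (S.PS). Then for every $u\in\dot{\mathscr U}^{\rm c}(\Lambda^{\rm h})$ the map $(\ell,\rho)\mapsto V^{\rm h}_{,\rho}(0)\cdot D_\rho u(\ell)$ belongs to $\ell^1(\Lambda^{\rm h}\times\Lambda^{\rm h}_* )$ and $$\sum_{\ell\in\Lambda^{\rm h}}\sum_{\rho\in\Lambda^{\rm h}_*}V^{\rm h}_{,\rho}(0)^{\rm T}D_\rho u(\ell)=0.$$
   Context: $B_R$ is the open ball of radius $R$ at $0$. $A\in\mathbb R^{d\times d}$ nonsingular, $\Lambda^{\rm h}:=A\mathbb Z^d$, $\Lambda^{\rm h}_*:=\Lambda^{\rm h}\setminus\{0\}$. For $u:\Lambda^{\rm h}\to\mathbb R^d$: $D_\rho u(\ell):=u(\ell+\rho)-u(\ell)$, $Du(\ell):=(D_\rho u(\ell))_{\rho\in\Lambda^{\rm h}_*}$; $\dot{\mathscr U}^{\rm c}(\Lambda^{\rm h})$ is the set of $u$ constant outside some ball. For $k>0$, $\mathscr L_k$ is the set of monotonically decreasing $\mathfrak w:[0,\infty)\to(0,\infty)$ with $\|\mathfrak w\|_{L^\infty}+\int_0^\infty r^{k+d-1}\mathfrak w(r)dr<\infty$. For $\mathfrak m,\lambda>0$, $\mathscr A_{\mathfrak m,\lambda}(\Lambda^{\rm h})$ is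 the set of $y:\Lambda^{\rm h}\to\mathbb R^d$ with $B_\lambda(z)\cap y(\Lambda^{\rm h})\neq\emptyset$ for all $z$ and $|y(\ell)-y(m)|\ge\mathfrak m|\ell-m|$; $\mathscr A$ is the union over $\mathfrak m,\lambda>0$. The homogeneous site strain potential $V^{\rm h}$ is a function on $\{Dw(\ell):x+w\in\mathscr A(\Lambda^{\rm h}),\ell\in\Lambda^{\rm h}\}\subset(\mathbb R^d)^{\Lambda^{\rm h}_*}$, with partial derivatives $V^{\rm h}_{,\boldsymbol\rho}(\boldsymbol g):=\partial^jV^{\rm h}(\boldsymbol g)/\partial\boldsymbol g_{\rho_1}\cdots\partial\boldsymbol g_{\rho_j}$. (S.R): $V^{\rm h}$ has partial derivatives up to order $\mathfrak n\ge3$. (S.L): with $\mathcal P(j)$ the set of partitions $\{A_1,\dots,A_k\}$ of $\{1,\dots,j\}$ into nonempty sets and $i'$ the smallest element of $A_i$, there exist $\mathfrak w_i\in\mathscr L_i$ and constants $C_j(\mathfrak m,\lambda)$ with $|V^{\rm h}_{,\boldsymbol\rho}(Dw(\ell))|\le C_j\sum_{\mathcal P(j)}\prod_i\big(\mathfrak w_{|A_i|}(|\rho_{i'}|)\prod_{m\in A_i}\delta_{\rho_{i'}\rho_m}\big)$ for all $w$ with $x+w\in\mathscr A_{\mathfrak m,\lambda}(\Lambda^{\rm h})$, $\ell$, $\boldsymbol\rho\in(\Lambda^{\rm h}_* )^j$, $j\le\mathfrak n$. (S.PS): $V^{\rm h}((-g_{-\rho})_{\rho\in\Lambda^{\rm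 h}_*})=V^{\rm h}(\boldsymbol g)$ for all $\boldsymbol g\in(\mathbb R^d)^{\Lambda^{\rm h}_*}$. *)

theory Defs
  imports "HOL-Analysis.Analysis" "HOL-Library.Disjoint_Sets"
begin

definition lattice :: "real^'d^'d \<Rightarrow> (real^'d) set" where
  "lattice A = {A *v (\<chi> i. of_int (z $ i)) | z :: int^'d. True}"

definition lattice_star :: "real^'d^'d \<Rightarrow> (real^'d) set" where
  "lattice_star A = lattice A - {0}"

definition Dstencil :: "real^'d^'d \<Rightarrow> (real^'d \<Rightarrow> real^'d) \<Rightarrow> real^'d \<Rightarrow> (real^'d \<Rightarrow> real^'d)" where
  "Dstencil A w l = (\<lambda>\<rho>. if \<rho> \<in> lattice_star A then w (l + \<rho>) - w l else 0)"

definition Uc :: "real^'d^'d \<Rightarrow> (real^'d \<Rightarrow> real^'d) set" where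
  "Uc A = {u. \<exists>R c. \<forall>l \<in> lattice A - ball 0 R. u l = c}"

definition adm :: "real^'d^'d \<Rightarrow> real \<Rightarrow> real \<Rightarrow> (real^'d \<Rightarrow> real^'d) set" where
  "adm A mm lam = {y. (\<forall>z. \<exists>l\<in>lattice A. y l \<in> ball z lam) \<and>
       (\<forall>l\<in>lattice A. \<forall>m\<in>lattice A. norm (y l - y m) \<ge> mm * norm (l - m))}"

definition adm_all :: "real^'d^'d \<Rightarrow> (real^'d \<Rightarrow> real^'d) set" where
  "adm_all A = (\<Union>mm\<in>{0<..}. \<Union>lam\<in>{0<..}. adm A mm lam)"

text \<open>Domain of the site potential: {Dw(l) : x + w admissible, l in Lambda}, x = id.\<close>
definition dom_V :: "real^'d^'d \<Rightarrow> (real^'d \<Rightarrow> real^'d) set" where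
  "dom_V A = {Dstencil A w l | w l. l \<in> lattice A \<and> (\<lambda>m. m + w m) \<in> adm_all A}"

text \<open>Iterated scalar partial derivatives of V with respect to the coordinates
  (g_rho)_i; the list [(rho1,i1),...,(rhoj,ij)] encodes
  d^j V / d(g_rho1)_i1 ... d(g_rhoj)_ij.\<close>
primrec pd :: "((real^'d \<Rightarrow> real^'d) \<Rightarrow> real) \<Rightarrow> ((real^'d) \<times> 'd) list \<Rightarrow> (real^'d \<Rightarrow> real^'d) \<Rightarrow> real" where
  "pd V [] g = V g"
| "pd V (c # cs) g = deriv (\<lambda>t. pd V cs (g(fst c := g (fst c) + t *\<^sub>R axis (snd c) 1))) 0"

definition grad_V :: "((real^'d \<Rightarrow> real^'d) \<Rightarrow> real) \<Rightarrow> real^'d \<Rightarrow> (real^'d \<Rightarrow> real^'d) \<Rightarrow> real^'d" where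
  "grad_V V \<rho> g = (\<chi> i. pd V [(\<rho>, i)] g)"

definition SR :: "real^'d^'d \<Rightarrow> nat \<Rightarrow> ((real^'d \<Rightarrow> real^'d) \<Rightarrow> real) \<Rightarrow> bool" where
  "SR A n V \<longleftrightarrow> (\<forall>cs g \<rho> i. length cs < n \<and> set (map fst cs) \<subseteq> lattice_star A \<and>
      \<rho> \<in> lattice_star A \<and> g \<in> dom_V A \<longrightarrow>
      (\<lambda>t. pd V cs (g(\<rho> := g \<rho> + t *\<^sub>R axis i 1))) differentiable (at 0))"

definition Lw :: "nat \<Rightarrow> nat \<Rightarrow> (real \<Rightarrow> real) \<Rightarrow> bool" where
  "Lw d k w \<longleftrightarrow> antimono_on {0..} w \<and> (\<forall>r\<ge>0. w r > 0) \<and> bdd_above (w ` {0..}) \<and>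
      (\<lambda>r. r ^ (k + d - 1) * w r) integrable_on {0..}"

definition SL :: "real^'d^'d \<Rightarrow> nat \<Rightarrow> ((real^'d \<Rightarrow> real^'d) \<Rightarrow> real) \<Rightarrow> bool" where
  "SL A n V \<longleftrightarrow> (\<exists>(w :: nat \<Rightarrow> real \<Rightarrow> real) (C :: nat \<Rightarrow> real \<Rightarrow> real \<Rightarrow> real).
      (\<forall>k\<in>{1..n}. Lw CARD('d) k (w k)) \<and>
      (\<forall>mm>0. \<forall>lam>0. \<forall>u l cs. (\<lambda>m. m + u m) \<in> adm A mm lam \<and> l \<in> lattice A \<and>
          1 \<le> length cs \<and> length cs \<le> n \<and> set (map fst cs) \<subseteq> lattice_star A \<longrightarrow>
          \<bar>pd V cs (Dstencil A u l)\<bar> \<le> C (length cs) mm lam *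
            (\<Sum>P\<in>{P. partition_on {..<length cs} P}.
               \<Prod>B\<in>P. w (card B) (norm (fst (cs ! Min B))) *
                        (\<Prod>m\<in>B. if fst (cs ! Min B) = fst (cs ! m) then 1 else 0))))"

definition SPS :: "real^'d^'d \<Rightarrow> ((real^'d \<Rightarrow> real^'d) \<Rightarrow> real) \<Rightarrow> bool" where
  "SPS A V \<longleftrightarrow> (\<forall>g\<in>dom_V A. V (\<lambda>\<rho>. if \<rho> \<in> lattice_star A then - g (- \<rho>) else 0) = V g)"

end

theory Submission imports Defs begin

definition vecint :: "int^'d \<Rightarrow> real^'d" where "vecint z = (\<chi> i. of_int (z $ i))"

lemma lattice_eq: "lattice A = range (\<lambda>z. A *v vecint z)"
  unfolding lattice_def vecint_def by auto

lemma vecint_add: "vecint (a + b) = vecint a + vecint b"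
  by (simp add: vecint_def vec_eq_iff)
lemma vecint_neg: "vecint (- a) = - vecint a"
  by (simp add: vecint_def vec_eq_iff)
lemma vecint_0: "vecint 0 = 0"
  by (simp add: vecint_def vec_eq_iff)
lemma vecint_inj: "inj vecint"
  by (auto simp: inj_def vecint_def vec_eq_iff)

lemma lat_add: "l \<in> lattice A \<Longrightarrow> m \<in> lattice A \<Longrightarrow> l + m \<in> lattice A"
proof -
  assume "l \<in> lattice A" "m \<in> lattice A"
  then obtain a b where "l = A *v vecint a" "m = A *v vecint b" unfolding lattice_eq by auto
  then have "l + m = A *v vecint (a + b)" by (simp add: vecint_add matrix_vector_right_distrib)
  then show ?thesis unfolding lattice_eq by auto
qed

lemma lat_neg: "l \<in> lattice A \<Longrightarrow> - l \<in> lattice A"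
proof -
  assume "l \<in> lattice A"
  then obtain a where "l = A *v vecint a" unfolding lattice_eq by auto
  then have "- l = A *v vecint (- a)"
    by (metis vecint_neg diff_0 matrix_vector_mult_diff_distrib matrix_vector_mult_0_right)
  then show ?thesis unfolding lattice_eq by auto
qed

lemma lat_diff: "l \<in> lattice A \<Longrightarrow> m \<in> lattice A \<Longrightarrow> l - m \<in> lattice A"
  using lat_add[OF _ lat_neg] by (metis diff_conv_add_uminus)

lemma lat_0: "0 \<in> lattice A"
  unfolding lattice_eq by (auto intro!: image_eqI[where x=0] simp: vecint_0)

lemma mat_bound: "\<exists>B>0. \<forall>x. norm (M *v x) \<le> B * norm (x::real^'n)" for M :: "real^'n^'m"
  using bounded_linear.pos_bounded[OF matrix_vector_mul_bounded_linear[of M]]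
  by (metis mult.commute)

lemma mat_lower:
  fixes A :: "real^'d^'d" assumes "invertible A"
  shows "\<exists>c>0. \<forall>x. c * norm x \<le> norm (A *v x)"
proof -
  obtain A' where A': "A' ** A = mat 1" using assms unfolding invertible_def by blast
  obtain B where B: "B > 0" "\<forall>x. norm (A' *v x) \<le> B * norm x" using mat_bound by blast
  have "(1/B) * norm x \<le> norm (A *v x)" for x
  proof -
    have "x = A' *v (A *v x)" by (simp add: matrix_vector_mul_assoc A')
    then have "norm x \<le> B * norm (A *v x)" using B by metis
    then show ?thesis using B by (simp add: field_simps)
  qed
  then show ?thesis using B by (intro exI[of _ "1/B"]) auto
qed

lemma lat_inj:
  fixes A :: "real^'d^'d" assumes "invertible A"
  shows "inj (\<lambda>z. A *v vecint z)"
proof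
  fix a b assume "A *v vecint a = A *v vecint b"
  then have "A *v (vecint a - vecint b) = 0" by (simp add: matrix_vector_mult_diff_distrib)
  then have "norm (vecint a - vecint b) = 0" using mat_lower[OF assms]
    by (metis mult_le_0_iff norm_eq_zero norm_ge_zero order_less_le order_antisym)
  then show "a = b" using vecint_inj by (auto simp: inj_def)
qed

lemma covering:
  fixes A :: "real^'d^'d" assumes "invertible A"
  shows "\<exists>lam>0. \<forall>z. \<exists>l\<in>lattice A. l \<in> ball z lam"
proof -
  obtain A' where A': "A ** A' = mat 1" using assms unfolding invertible_def by blast
  obtain B where B: "B > 0" "\<forall>x. norm (A *v x) \<le> B * norm x" using mat_bound by blast
  have "\<exists>l\<in>lattice A. l \<in> ball z (B * CARD('d) + 1)" for z
  proof -
    define y where "y = A' *v z"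
    define r :: "int^'d" where "r = (\<chi> i. round (y$i))"
    have zy: "z = A *v y" by (simp add: y_def matrix_vector_mul_assoc A')
    have "norm (y - vecint r) \<le> (\<Sum>i\<in>UNIV. \<bar>(y - vecint r)$i\<bar>)" by (rule norm_le_l1_cart)
    also have "\<dots> \<le> (\<Sum>i\<in>(UNIV::'d set). 1/2)"
      apply (rule sum_mono) using of_int_round_abs_le by (simp add: r_def vecint_def abs_minus_commute)
    also have "\<dots> \<le> CARD('d)" by simp
    finally have 1: "norm (y - vecint r) \<le> CARD('d)" .
    have "dist z (A *v vecint r) = norm (A *v (y - vecint r))"
      by (simp add: zy dist_norm matrix_vector_mult_diff_distrib)
    also have "\<dots> \<le> B * CARD('d)" using B 1 by (meson mult_left_mono order_trans less_imp_le)
    finally have "dist z (A *v vecint r) < B * CARD('d) + 1" by simp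
    then show ?thesis unfolding lattice_eq by (auto simp: dist_commute)
  qed
  moreover have "B * CARD('d) + 1 > 0" using B by (simp add: add_pos_nonneg)
  ultimately show ?thesis by blast
qed

lemma id_adm:
  fixes A :: "real^'d^'d" assumes "invertible A"
  shows "\<exists>lam>0. (\<lambda>m. m + (\<lambda>_. 0) m) \<in> adm A 1 lam"
  using covering[OF assms] unfolding adm_def by auto

lemma partitions_one: "{P. partition_on {..<Suc 0} P} = {{{0::nat}}}"
proof -
  have "partition_on {0} P \<longleftrightarrow> P = {{0::nat}}" for P
  proof
    assume h: "partition_on {0} P"
    then have U: "\<Union>P = {0}" and E: "{} \<notin> P" by (auto simp: partition_on_def)
    have "\<forall>p\<in>P. p = {0}"
    proof
      fix p assume p: "p \<in> P"
      then have "p \<subseteq> {0}" using U by auto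
      moreover have "p \<noteq> {}" using p E by auto
      ultimately show "p = {0}" using subset_singletonD by auto
    qed
    moreover have "P \<noteq> {}" using U by auto
    ultimately show "P = {{0}}" by auto
  qed (simp add: partition_on_space)
  moreover have "{..<Suc 0} = {0::nat}" by auto
  ultimately show ?thesis by auto
qed

lemma grad_bound:
  fixes A :: "real^'d^'d" and V :: "(real^'d \<Rightarrow> real^'d) \<Rightarrow> real"
  assumes "invertible A" "SL A n V" "n \<ge> 1"
  shows "\<exists>K w1. Lw CARD('d) 1 w1 \<and> (\<forall>\<rho>\<in>lattice_star A. norm (grad_V V \<rho> (\<lambda>_. 0)) \<le> K * w1 (norm \<rho>))"
proof -
  obtain w :: "nat \<Rightarrow> real \<Rightarrow> real" and C where
    Lw: "\<forall>k\<in>{1..n}. Lw CARD('d) k (w k)" and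
    b: "\<forall>mm>0. \<forall>lam>0. \<forall>u l cs. (\<lambda>m. m + u m) \<in> adm A mm lam \<and> l \<in> lattice A \<and>
          1 \<le> length cs \<and> length cs \<le> n \<and> set (map fst cs) \<subseteq> lattice_star A \<longrightarrow>
          \<bar>pd V cs (Dstencil A u l)\<bar> \<le> C (length cs) mm lam *
            (\<Sum>P\<in>{P. partition_on {..<length cs} P}.
               \<Prod>B\<in>P. w (card B) (norm (fst (cs ! Min B))) *
                        (\<Prod>m\<in>B. if fst (cs ! Min B) = fst (cs ! m) then 1 else 0))"
    using assms(2) unfolding SL_def by blast
  obtain lam where lam: "lam > 0" "(\<lambda>m. m + (\<lambda>_. 0) m) \<in> adm A 1 lam" using id_adm[OF assms(1)] by blast
  have D0: "Dstencil A (\<lambda>_. 0) 0 = (\<lambda>_. 0)" by (simp add: Dstencil_def fun_eq_iff)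
  have comp: "\<bar>pd V [(\<rho>, i)] (\<lambda>_. 0)\<bar> \<le> C 1 1 lam * w 1 (norm \<rho>)" if "\<rho> \<in> lattice_star A" for \<rho> i
  proof -
    have "\<bar>pd V [(\<rho>, i)] (Dstencil A (\<lambda>_. 0) 0)\<bar> \<le> C (length [(\<rho>, i)]) 1 lam *
            (\<Sum>P\<in>{P. partition_on {..<length [(\<rho>, i)]} P}.
               \<Prod>B\<in>P. w (card B) (norm (fst ([(\<rho>, i)] ! Min B))) *
                        (\<Prod>m\<in>B. if fst ([(\<rho>, i)] ! Min B) = fst ([(\<rho>, i)] ! m) then 1 else 0))"
      apply (rule b[rule_format]) using lam that assms(3) lat_0 by auto
    then show ?thesis by (simp add: D0 partitions_one)
  qed
  have "norm (grad_V V \<rho> (\<lambda>_. 0)) \<le> (CARD('d) * \<bar>C 1 1 lam\<bar>) * w 1 (norm \<rho>)" if "\<rho> \<in> lattice_star A" for \<rho>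
  proof -
    have "norm (grad_V V \<rho> (\<lambda>_. 0)) \<le> (\<Sum>i\<in>UNIV. \<bar>grad_V V \<rho> (\<lambda>_. 0) $ i\<bar>)" by (rule norm_le_l1_cart)
    also have "\<dots> \<le> (\<Sum>i\<in>(UNIV::'d set). \<bar>C 1 1 lam\<bar> * w 1 (norm \<rho>))"
    proof (rule sum_mono)
      fix i
      have "C 1 1 lam * w 1 (norm \<rho>) \<le> \<bar>C 1 1 lam\<bar> * w 1 (norm \<rho>)"
      proof (intro mult_right_mono)
        have "Lw CARD('d) 1 (w 1)" using Lw assms(3) by auto
        then show "0 \<le> w 1 (norm \<rho>)" unfolding Lw_def by (meson norm_ge_zero less_imp_le)
      qed simp
      then show "\<bar>grad_V V \<rho> (\<lambda>_. 0) $ i\<bar> \<le> \<bar>C 1 1 lam\<bar> * w 1 (norm \<rho>)"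
        using comp[OF that, of i] by (simp add: grad_V_def)
    qed
    also have "\<dots> = (CARD('d) * \<bar>C 1 1 lam\<bar>) * w 1 (norm \<rho>)" by simp
    finally show ?thesis .
  qed
  moreover have "Lw CARD('d) 1 (w 1)" using Lw assms(3) by auto
  ultimately show ?thesis by blast
qed

lemma box_fin_card:
  "finite {z::int^'d. \<forall>i. \<bar>z$i\<bar> \<le> int j} \<and> card {z::int^'d. \<forall>i. \<bar>z$i\<bar> \<le> int j} \<le> (2*j+1)^CARD('d)"
proof -
  let ?P = "PiE (UNIV::'d set) (\<lambda>_. {- int j..int j})"
  have sub: "{z::int^'d. \<forall>i. \<bar>z$i\<bar> \<le> int j} \<subseteq> (\<lambda>f. \<chi> i. f i) ` ?P"
  proof
    fix z :: "int^'d" assume "z \<in> {z::int^'d. \<forall>i. \<bar>z$i\<bar> \<le> int j}"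
    then have "\<bar>z$i\<bar> \<le> int j" for i by simp
    then have "z$i \<in> {- int j..int j}" for i by (metis abs_le_iff atLeastAtMost_iff minus_le_iff)
    then have "(\<lambda>i. z$i) \<in> ?P" by (auto simp: PiE_iff)
    then show "z \<in> (\<lambda>f. \<chi> i. f i) ` ?P" by (intro image_eqI[of _ _ "\<lambda>i. z$i"]) auto
  qed
  have fP: "finite ?P" by (rule finite_PiE) auto
  have cP: "card ?P = (2*j+1)^CARD('d)"
    by (subst card_PiE) (auto simp: nat_add_distrib nat_mult_distrib)
  show ?thesis
    using sub fP cP finite_subset card_mono card_image_le
    by (metis (no_types, lifting) finite_imageI order_trans)
qed

lemma series_bound:
  fixes w1 :: "real \<Rightarrow> real"
  assumes L: "Lw d 1 w1" and c: "c > 0"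
  shows "\<exists>M. \<forall>N. (\<Sum>j=1..N. real ((2*j+1)^d) * w1 (c * real j)) \<le> M"
proof -
  define g where "g = (\<lambda>r. r^d * w1 r)"
  have gi: "g integrable_on {0..}" using L by (simp add: Lw_def g_def)
  have am: "antimono_on {0..} w1" and wp: "\<And>r. r \<ge> 0 \<Longrightarrow> w1 r > 0" using L by (auto simp: Lw_def)
  have gsub: "g integrable_on {a..b}" if "0 \<le> a" for a b
    by (rule integrable_on_subinterval[OF gi]) (use that in auto)
  have S1: "c^(d+1) * (real j - 1)^d * w1 (c * real j) \<le> integral {c*(real j - 1)..c * real j} g"
    if "j \<ge> 1" for j :: nat
  proof -
    have a0: "0 \<le> c * (real j - 1)" using that c by simp
    have "integral {c*(real j - 1)..c * real j} (\<lambda>r. (c*(real j - 1))^d * w1 (c * real j))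
          \<le> integral {c*(real j - 1)..c * real j} g"
    proof (rule integral_le)
      show "g integrable_on {c * (real j - 1)..c * real j}" using gsub a0 by blast
      fix r assume r: "r \<in> {c * (real j - 1)..c * real j}"
      then have r0: "r \<ge> 0" using a0 by auto
      have "(c*(real j - 1))^d \<le> r^d" using r a0 by (intro power_mono) auto
      moreover have "w1 (c * real j) \<le> w1 r" using am r r0 a0
        by (intro monotone_onD[OF am]) auto
      moreover have "0 \<le> w1 (c * real j)" using wp c by (simp add: less_imp_le)
      moreover have "0 \<le> r^d" using r0 by simp
      ultimately show "(c*(real j - 1))^d * w1 (c * real j) \<le> g r"
        unfolding g_def by (intro mult_mono) auto
    qed (rule integrable_const_ivl)
    moreover have "integral {c*(real j - 1)..c * real j} (\<lambda>r. (c*(real j - 1))^d * w1 (c * real j))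
       = c^(d+1) * (real j - 1)^d * w1 (c * real j)"
    proof -
      have e: "c * real j - c * (real j - 1) = c" by (simp add: algebra_simps)
      have "integral {c*(real j - 1)..c * real j} (\<lambda>r. (c*(real j - 1))^d * w1 (c * real j))
         = c * ((c*(real j - 1))^d * w1 (c * real j))" using c e by simp
      also have "\<dots> = c^(d+1) * (real j - 1)^d * w1 (c * real j)" by (simp add: power_mult_distrib)
      finally show ?thesis .
    qed
    ultimately show ?thesis by linarith
  qed
  have S2: "(\<Sum>j=1..N. integral {c*(real j - 1)..c * real j} g) = integral {0..c * real N} g" for N
  proof (induction N)
    case 0 then show ?case by simp
  next
    case (Suc N)
    have "(\<Sum>j=1..Suc N. integral {c*(real j - 1)..c * real j} g)
        = integral {0..c * real N} g + integral {c * real N..c * real (Suc N)} g"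
      using Suc by (simp add: algebra_simps)
    also have "\<dots> = integral {0..c * real (Suc N)} g"
      by (rule Henstock_Kurzweil_Integration.integral_combine) (use c gsub in auto)
    finally show ?case .
  qed
  define I where "I = integral {0..} g"
  have S3: "integral {0..c * real N} g \<le> I" for N
    unfolding I_def
    by (rule integral_subset_le) (use gsub gi wp in \<open>auto simp: g_def less_imp_le\<close>)
  have T: "real ((2*j+1)^d) * w1 (c * real j) \<le> 6^d * ((real j - 1)^d * w1 (c * real j)) + (if j = 1 then 3^d * w1 c else 0)"
    if "j \<ge> 1" for j :: nat
  proof (cases "j = 1")
    case True
    have "0 \<le> 6^d * ((real j - 1)^d * w1 (c * real j))" using wp c True by (simp add: less_imp_le)
    then show ?thesis using True by simp
  next
    case False
    then have j2: "j \<ge> 2" using that by simp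
    have "real ((2*j+1)^d) = (2 * real j + 1)^d" by (simp add: add.commute)
    also have "\<dots> \<le> (6 * (real j - 1))^d" using j2 by (intro power_mono) auto
    also have "\<dots> = 6^d * (real j - 1)^d" by (rule power_mult_distrib)
    finally have "real ((2*j+1)^d) * w1 (c * real j) \<le> 6^d * (real j - 1)^d * w1 (c * real j)"
      using wp c by (intro mult_right_mono) (auto simp: less_imp_le)
    then show ?thesis using False by simp
  qed
  have "(\<Sum>j=1..N. real ((2*j+1)^d) * w1 (c * real j)) \<le> 6^d / c^(d+1) * I + 3^d * w1 c" for N
  proof -
    have "(\<Sum>j=1..N. real ((2*j+1)^d) * w1 (c * real j))
        \<le> (\<Sum>j=1..N. 6^d * ((real j - 1)^d * w1 (c * real j)) + (if j = 1 then 3^d * w1 c else 0))"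
      by (rule sum_mono) (use T in auto)
    also have "\<dots> = 6^d * (\<Sum>j=1..N. (real j - 1)^d * w1 (c * real j)) + (\<Sum>j=1..N. (if j = 1 then 3^d * w1 c else 0))"
      by (simp add: sum.distrib sum_distrib_left)
    also have "(\<Sum>j=1..N. (if j = 1 then 3^d * w1 c else 0)) \<le> 3^d * w1 c"
      using wp c by (cases "N \<ge> 1") (auto simp: less_imp_le)
    also have "(\<Sum>j=1..N. (real j - 1)^d * w1 (c * real j)) \<le> I / c^(d+1)"
    proof -
      have "c^(d+1) * (\<Sum>j=1..N. (real j - 1)^d * w1 (c * real j))
          = (\<Sum>j=1..N. c^(d+1) * (real j - 1)^d * w1 (c * real j))"
        by (simp add: sum_distrib_left mult.assoc)
      also have "\<dots> \<le> (\<Sum>j=1..N. integral {c*(real j - 1)..c * real j} g)"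
        by (rule sum_mono) (use S1 in auto)
      also have "\<dots> \<le> I" using S2 S3 by simp
      finally show ?thesis using c by (simp add: field_simps)
    qed
    then have "6^d * (\<Sum>j=1..N. (real j - 1)^d * w1 (c * real j)) \<le> 6^d * (I / c^(d+1))"
      by (intro mult_left_mono) auto
    finally show ?thesis by simp
  qed
  then show ?thesis by blast
qed

definition kz :: "int^'d \<Rightarrow> nat" where "kz z = nat (Max (range (\<lambda>i. \<bar>z$i\<bar>)))"

lemma kz_ge: "\<bar>z$i\<bar> \<le> int (kz z)"
proof -
  have "\<bar>z$i\<bar> \<le> Max (range (\<lambda>i. \<bar>z$i\<bar>))" by (rule Max_ge) auto
  then show ?thesis unfolding kz_def by linarith
qed

lemma kz_pos: "z \<noteq> 0 \<Longrightarrow> kz z \<ge> 1"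
proof -
  assume "z \<noteq> 0"
  then obtain i where "z$i \<noteq> 0" by (auto simp: vec_eq_iff)
  then have "1 \<le> \<bar>z$i\<bar>" by auto
  then show ?thesis using kz_ge[of z i] by linarith
qed

lemma kz_norm: "real (kz z) \<le> norm (vecint z)"
proof -
  have "Max (range (\<lambda>i. \<bar>z$i\<bar>)) \<in> range (\<lambda>i. \<bar>z$i\<bar>)" by (rule Max_in) auto
  then obtain i where i: "Max (range (\<lambda>i. \<bar>z$i\<bar>)) = \<bar>z$i\<bar>" by (metis imageE)
  have "real (kz z) = \<bar>vecint z $ i\<bar>" by (simp add: kz_def i vecint_def)
  also have "\<dots> \<le> norm (vecint z)" by (rule component_le_norm_cart)
  finally show ?thesis .
qed

lemma lattice_star_eq:
  fixes A :: "real^'d^'d" assumes "invertible A"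
  shows "lattice_star A = (\<lambda>z. A *v vecint z) ` (UNIV - {0})"
proof -
  have "A *v vecint z = 0 \<longleftrightarrow> z = 0" for z
    using lat_inj[OF assms] unfolding inj_def by (metis matrix_vector_mult_0_right vecint_0)
  then show ?thesis unfolding lattice_star_def lattice_eq by auto
qed

lemma lattice_summable:
  fixes A :: "real^'d^'d" and w1 :: "real \<Rightarrow> real"
  assumes A: "invertible A" and L: "Lw CARD('d) 1 w1"
  shows "(\<lambda>\<rho>. w1 (norm \<rho>)) summable_on lattice_star A"
proof -
  obtain c where c: "c > 0" "\<forall>x. c * norm x \<le> norm (A *v x)" using mat_lower[OF A] by blast
  obtain M where M: "\<forall>N. (\<Sum>j=1..N. real ((2*j+1)^CARD('d)) * w1 (c * real j)) \<le> M"
    using series_bound[OF L c(1)] by blast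
  have am: "antimono_on {0..} w1" and wp: "\<And>r. r \<ge> 0 \<Longrightarrow> w1 r > 0" using L by (auto simp: Lw_def)
  define f where "f z = w1 (norm (A *v vecint z))" for z
  have fb: "f z \<le> w1 (c * real (kz z))" for z
  proof -
    have "c * real (kz z) \<le> c * norm (vecint z)" using kz_norm c by (intro mult_left_mono) auto
    also have "\<dots> \<le> norm (A *v vecint z)" using c by auto
    finally show ?thesis unfolding f_def using c
      by (intro monotone_onD[OF am]) auto
  qed
  have "f summable_on (UNIV - {0})"
  proof (rule nonneg_bdd_above_summable_on)
    show "0 \<le> f x" for x unfolding f_def using wp by (simp add: less_imp_le)
    show "bdd_above (sum f ` {F. F \<subseteq> UNIV - {0} \<and> finite F})"
    proof (rule bdd_aboveI2)
      fix F :: "(int^'d) set" assume F: "F \<in> {F. F \<subseteq> UNIV - {0} \<and> finite F}"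
      then have Ff: "finite F" and F0: "0 \<notin> F" by auto
      define N where "N = Max (insert 0 (kz ` F))"
      have kzF: "kz ` F \<subseteq> {1..N}"
      proof
        fix j assume "j \<in> kz ` F"
        then obtain z where z: "z \<in> F" "j = kz z" by auto
        then have "z \<noteq> 0" using F0 by auto
        then have "1 \<le> j" using kz_pos z by auto
        moreover have "j \<le> N" unfolding N_def using z Ff by (intro Max_ge) auto
        ultimately show "j \<in> {1..N}" by auto
      qed
      have "sum f F \<le> (\<Sum>z\<in>F. w1 (c * real (kz z)))" by (rule sum_mono) (rule fb)
      also have "\<dots> = (\<Sum>j\<in>{1..N}. \<Sum>z\<in>{z. z \<in> F \<and> kz z = j}. w1 (c * real (kz z)))"
        by (rule sum.group[symmetric]) (use Ff kzF in auto)
      also have "\<dots> = (\<Sum>j\<in>{1..N}. real (card {z. z \<in> F \<and> kz z = j}) * w1 (c * real j))"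
        by (rule sum.cong) auto
      also have "\<dots> \<le> (\<Sum>j\<in>{1..N}. real ((2*j+1)^CARD('d)) * w1 (c * real j))"
      proof (rule sum_mono)
        fix j assume "j \<in> {1..N}"
        have sub: "{z. z \<in> F \<and> kz z = j} \<subseteq> {z::int^'d. \<forall>i. \<bar>z$i\<bar> \<le> int j}"
          using kz_ge by auto
        have "card {z. z \<in> F \<and> kz z = j} \<le> (2*j+1)^CARD('d)"
          using box_fin_card[of j, where 'd='d] card_mono[OF _ sub] by (meson order_trans)
        then have "real (card {z. z \<in> F \<and> kz z = j}) \<le> real ((2*j+1)^CARD('d))"
          by (simp only: of_nat_le_iff)
        then show "real (card {z. z \<in> F \<and> kz z = j}) * w1 (c * real j) \<le> real ((2*j+1)^CARD('d)) * w1 (c * real j)"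
          using wp c by (intro mult_right_mono) (auto simp: less_imp_le)
      qed
      also have "\<dots> \<le> M" using M by blast
      finally show "sum f F \<le> M" .
    qed
  qed
  moreover have "f = (\<lambda>z. w1 (norm (A *v vecint z)))" by (simp add: fun_eq_iff f_def)
  ultimately show ?thesis
    unfolding lattice_star_eq[OF A]
    by (subst summable_on_reindex) (use lat_inj[OF A] in \<open>auto simp: inj_on_def f_def o_def\<close>)
qed

lemma hs_fin:
  fixes h :: "'a \<Rightarrow> 'b::{comm_monoid_add, topological_space}"
  assumes "finite S" "S \<subseteq> T" "\<And>x. x \<in> T - S \<Longrightarrow> h x = 0"
  shows "(h has_sum sum h S) T"
proof -
  have "(h has_sum sum h S) S" using assms(1) by simp
  then show ?thesis
    by (subst has_sum_cong_neutral[of T S h h, symmetric]) (use assms in auto)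
qed

lemma hs_shift:
  fixes h :: "real^'d \<Rightarrow> 'b::{comm_monoid_add, topological_space}"
  assumes "finite S" "S \<subseteq> lattice A" "\<And>x. x \<in> lattice A - S \<Longrightarrow> h x = 0" "\<rho> \<in> lattice A"
  shows "((\<lambda>l. h (l + \<rho>)) has_sum sum h S) (lattice A)"
proof -
  have "bij_betw (\<lambda>l. l + \<rho>) (lattice A) (lattice A)"
  proof (rule bij_betwI[where g="\<lambda>l. l - \<rho>"])
    show "(\<lambda>l. l + \<rho>) \<in> lattice A \<rightarrow> lattice A" using lat_add assms(4) by auto
    show "(\<lambda>l. l - \<rho>) \<in> lattice A \<rightarrow> lattice A" using lat_diff assms(4) by auto
  qed auto
  then have "((\<lambda>l. h (l + \<rho>)) has_sum sum h S) (lattice A) \<longleftrightarrow> (h has_sum sum h S) (lattice A)"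
    by (rule has_sum_reindex_bij_betw)
  then show ?thesis using hs_fin[OF assms(1-3)] by simp
qed

lemma lat_ball_finite:
  fixes A :: "real^'d^'d" assumes A: "invertible A"
  shows "finite (lattice A \<inter> ball 0 R)"
proof -
  obtain c where c: "c > 0" "\<forall>x. c * norm x \<le> norm (A *v x)" using mat_lower[OF A] by blast
  define j where "j = nat (ceiling (R / c))"
  have "lattice A \<inter> ball 0 R \<subseteq> (\<lambda>z. A *v vecint z) ` {z::int^'d. \<forall>i. \<bar>z$i\<bar> \<le> int j}"
  proof
    fix l assume l: "l \<in> lattice A \<inter> ball 0 R"
    then obtain z where z: "l = A *v vecint z" unfolding lattice_eq by auto
    have "c * norm (vecint z) < R" using c l z by (auto simp: dist_norm intro: le_less_trans)
    then have nz: "norm (vecint z) < R / c" using c by (simp add: field_simps mult.commute)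
    have "\<bar>z$i\<bar> \<le> int j" for i
    proof -
      have "real_of_int \<bar>z$i\<bar> = \<bar>vecint z $ i\<bar>" by (simp add: vecint_def)
      also have "\<dots> \<le> norm (vecint z)" by (rule component_le_norm_cart)
      finally have "real_of_int \<bar>z$i\<bar> \<le> R / c" using nz by linarith
      then show ?thesis unfolding j_def by linarith
    qed
    then show "l \<in> (\<lambda>z. A *v vecint z) ` {z::int^'d. \<forall>i. \<bar>z$i\<bar> \<le> int j}" using z by auto
  qed
  then show ?thesis using box_fin_card[of j, where 'd='d] finite_subset by blast
qed

theorem mainTheorem3:
  fixes A :: "real^'d^'d" and V :: "(real^'d \<Rightarrow> real^'d) \<Rightarrow> real" and n :: nat
    and u :: "real^'d \<Rightarrow> real^'d"
  assumes "CARD('d) \<in> {2, 3}"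
    and "invertible A"
    and "n \<ge> 3"
    and "SR A n V" and "SL A n V" and "SPS A V"
    and "u \<in> Uc A"
  shows "(\<lambda>(l, \<rho>). norm (grad_V V \<rho> (\<lambda>_. 0) \<bullet> (u (l + \<rho>) - u l)))
           summable_on (Sigma (lattice A) (\<lambda>_. lattice_star A))
         \<and> (\<Sum>\<^sub>\<infinity>l\<in>lattice A. \<Sum>\<^sub>\<infinity>\<rho>\<in>lattice_star A. grad_V V \<rho> (\<lambda>_. 0) \<bullet> (u (l + \<rho>) - u l)) = 0"
proof -
  note A = assms(2)
  define L where "L = lattice A"
  define Ls where "Ls = lattice_star A"
  have LsL: "Ls \<subseteq> L" unfolding Ls_def L_def lattice_star_def by auto
  define F where "F \<rho> = grad_V V \<rho> (\<lambda>_. 0)" for \<rho>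
  have n1: "n \<ge> 1" using assms(3) by simp
  obtain K w1 where L1: "Lw CARD('d) 1 w1" and Kb': "\<forall>\<rho>\<in>lattice_star A. norm (grad_V V \<rho> (\<lambda>_. 0)) \<le> K * w1 (norm \<rho>)"
    using grad_bound[OF A assms(5) n1] by blast
  have Kb: "\<forall>\<rho>\<in>lattice_star A. norm (F \<rho>) \<le> K * w1 (norm \<rho>)" using Kb' by (simp add: F_def)
  have Fs: "(\<lambda>\<rho>. norm (F \<rho>)) summable_on Ls"
    unfolding Ls_def by (rule summable_on_comparison_test[OF summable_on_cmult_right[OF lattice_summable[OF A L1], of K]])
       (use Kb in \<open>auto simp: Ls_def\<close>)
  define Fsum where "Fsum = infsum (\<lambda>\<rho>. norm (F \<rho>)) Ls"
  have Fhs: "((\<lambda>\<rho>. norm (F \<rho>)) has_sum Fsum) Ls" using Fs Fsum_def by (simp add: has_sum_infsum)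
  obtain R cc where Rc: "\<forall>l \<in> lattice A - ball 0 R. u l = cc" using assms(7) unfolding Uc_def by blast
  define v where "v l = u l - cc" for l
  define S where "S = L \<inter> ball 0 R"
  have Sf: "finite S" unfolding S_def L_def by (rule lat_ball_finite[OF A])
  have SL: "S \<subseteq> L" unfolding S_def by auto
  have v0: "v l = 0" if "l \<in> L - S" for l using Rc that unfolding v_def S_def L_def by auto
  have uv: "u a - u b = v a - v b" for a b unfolding v_def by simp
  have addL: "l + \<rho> \<in> L" if "l \<in> L" "\<rho> \<in> Ls" for l \<rho> using lat_add that LsL unfolding L_def by auto
  define Vsum where "Vsum = (\<Sum>m\<in>S. norm (v m))"
  have M1: "(\<lambda>(l, \<rho>). norm (F \<rho>) * norm (v l)) summable_on L \<times> Ls"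
  proof (rule summable_on_SigmaI[where g="\<lambda>l. norm (v l) * Fsum"])
    fix l assume "l \<in> L"
    show "((\<lambda>\<rho>. case (l, \<rho>) of (l, \<rho>) \<Rightarrow> norm (F \<rho>) * norm (v l)) has_sum norm (v l) * Fsum) Ls"
      using has_sum_cmult_left[OF Fhs, of "norm (v l)"] by (simp add: mult.commute)
  next
    have "((\<lambda>l. norm (v l) * Fsum) has_sum sum (\<lambda>l. norm (v l) * Fsum) S) L"
      by (rule hs_fin[OF Sf SL]) (simp add: v0)
    then show "(\<lambda>l. norm (v l) * Fsum) summable_on L" by (simp add: has_sum_imp_summable)
  qed auto
  have M2: "(\<lambda>(l, \<rho>). norm (F \<rho>) * norm (v (l + \<rho>))) summable_on L \<times> Ls"
  proof -
    have "(\<lambda>(\<rho>, l). norm (F \<rho>) * norm (v (l + \<rho>))) summable_on Ls \<times> L"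
    proof (rule summable_on_SigmaI[where g="\<lambda>\<rho>. norm (F \<rho>) * Vsum"])
      fix \<rho> assume r: "\<rho> \<in> Ls"
      have "((\<lambda>l. norm (v (l + \<rho>))) has_sum Vsum) L"
        unfolding Vsum_def L_def
        by (rule hs_shift) (use Sf SL v0 r LsL in \<open>auto simp: L_def\<close>)
      from has_sum_cmult_right[OF this, of "norm (F \<rho>)"]
      show "((\<lambda>l. case (\<rho>, l) of (\<rho>, l) \<Rightarrow> norm (F \<rho>) * norm (v (l + \<rho>))) has_sum norm (F \<rho>) * Vsum) L"
        by simp
    next
      show "(\<lambda>\<rho>. norm (F \<rho>) * Vsum) summable_on Ls"
        using summable_on_cmult_right[OF Fs, of Vsum] by (simp add: mult.commute)
    qed auto
    then show ?thesis by (subst summable_on_swap) (simp add: case_prod_unfold)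
  qed
  have Msum: "(\<lambda>(l, \<rho>). norm (F \<rho>) * norm (v (l + \<rho>)) + norm (F \<rho>) * norm (v l)) summable_on L \<times> Ls"
    using summable_on_add[OF M2 M1] by (simp add: case_prod_unfold)
  define f where "f = (\<lambda>(l, \<rho>). F \<rho> \<bullet> (u (l + \<rho>) - u l))"
  have nf: "(\<lambda>x. norm (f x)) summable_on L \<times> Ls"
  proof (rule summable_on_comparison_test[OF Msum])
    fix x assume "x \<in> L \<times> Ls"
    obtain l \<rho> where x: "x = (l, \<rho>)" by fastforce
    have "norm (f x) = \<bar>F \<rho> \<bullet> (v (l + \<rho>) - v l)\<bar>" by (simp add: f_def x uv)
    also have "\<dots> \<le> norm (F \<rho>) * norm (v (l + \<rho>) - v l)" by (rule Cauchy_Schwarz_ineq2)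
    also have "\<dots> \<le> norm (F \<rho>) * (norm (v (l + \<rho>)) + norm (v l))"
      by (intro mult_left_mono norm_triangle_ineq4) auto
    finally show "norm (f x) \<le> (case x of (l, \<rho>) \<Rightarrow> norm (F \<rho>) * norm (v (l + \<rho>)) + norm (F \<rho>) * norm (v l))"
      by (simp add: x distrib_left)
  qed auto
  have part1: "(\<lambda>(l, \<rho>). norm (grad_V V \<rho> (\<lambda>_. 0) \<bullet> (u (l + \<rho>) - u l)))
           summable_on (Sigma (lattice A) (\<lambda>_. lattice_star A))"
    using nf unfolding f_def F_def L_def Ls_def by (simp add: case_prod_unfold)
  have fs: "(\<lambda>(l, \<rho>). F \<rho> \<bullet> (u (l + \<rho>) - u l)) summable_on L \<times> Ls"
    using abs_summable_summable[OF nf] unfolding f_def .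
  have inner0: "(\<Sum>\<^sub>\<infinity>l\<in>L. F \<rho> \<bullet> (u (l + \<rho>) - u l)) = 0" if r: "\<rho> \<in> Ls" for \<rho>
  proof -
    have h1: "((\<lambda>l. F \<rho> \<bullet> v (l + \<rho>)) has_sum (\<Sum>m\<in>S. F \<rho> \<bullet> v m)) L"
      unfolding L_def by (rule hs_shift) (use Sf SL v0 r LsL in \<open>auto simp: L_def\<close>)
    have h2: "((\<lambda>l. F \<rho> \<bullet> v l) has_sum (\<Sum>m\<in>S. F \<rho> \<bullet> v m)) L"
      by (rule hs_fin[OF Sf SL]) (simp add: v0)
    have "((\<lambda>l. F \<rho> \<bullet> v (l + \<rho>) + - (F \<rho> \<bullet> v l)) has_sum ((\<Sum>m\<in>S. F \<rho> \<bullet> v m) + - (\<Sum>m\<in>S. F \<rho> \<bullet> v m))) L"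
      by (rule has_sum_add[OF h1]) (simp add: has_sum_uminus h2)
    then have "((\<lambda>l. F \<rho> \<bullet> (u (l + \<rho>) - u l)) has_sum 0) L"
      by (simp add: uv inner_diff_right)
    then show ?thesis by (rule infsumI)
  qed
  have "(\<Sum>\<^sub>\<infinity>l\<in>L. \<Sum>\<^sub>\<infinity>\<rho>\<in>Ls. F \<rho> \<bullet> (u (l + \<rho>) - u l)) = (\<Sum>\<^sub>\<infinity>\<rho>\<in>Ls. \<Sum>\<^sub>\<infinity>l\<in>L. F \<rho> \<bullet> (u (l + \<rho>) - u l))"
    by (rule infsum_swap_banach) (use fs in simp)
  also have "\<dots> = 0" by (rule infsum_0) (rule inner0)
  finally have part2: "(\<Sum>\<^sub>\<infinity>l\<in>L. \<Sum>\<^sub>\<infinity>\<rho>\<in>Ls. F \<rho> \<bullet> (u (l + \<rho>) - u l)) = 0" .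
  show ?thesis using part1 part2 unfolding F_def L_def Ls_def by simp
qed

end
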